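(* (1) (Modified LU decomposition) If $A$ is a complex $m\times m$ matrix with $\det(A^{(k)})\ne0$ for $k=1,\dots,m$ and $\det(\hat A^{(k)})\ne0$ for $k=1,\dots,m-1$, then there exist a unique lower triangular matrix $B$ and a unique upper triangular matrix $C$ with first diagonal entry $1$ and remaining first-row entries $0$ such that $A=B\cdot K\cdot C$, where $K$ is the $m\times m$ matrix with entries $1$ on the diagonal and on the superdiagonal and $0$ elsewhere. (2) (Modified Cholesky factorization for $(m-1)\times m$ matrices) If $A$ is a complex $(m-1)\times m$ matrix with $\det(A^{(k)})\ne0$ for $k=1,\dots,m-1$ and $\det(\hat A^{(k)})\ne0$ for $k=1,\dots,m-1$, then there exist a unique $(m-1)\times(m-1)$ lower triangular matrix $B$ and a unique $m\times m$ upper triangular matrix $C$ with first diagonal entry $1$ and remaining first-row entries $0$ such that $A=B\cdot K'\cdot C$, where $K'$ is the $(m-1)\times m$ matrix with entries $1$ in positions $(i,i)$ and $(i,i+1)$ for $i=1,\dots,m-1$ and $0$ elsewhere.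
   Context: For a matrix $A$, $A^{(k)}$ denotes its upper left $k\times k$ submatrix; $\hat A$ denotes the matrix obtained from $A$ by deleting its first column, and $\hat A^{(k)}$ the upper left $k\times k$ submatrix of $\hat A$. *)

theory Defs
  imports Complex_Main "Jordan_Normal_Form.Determinant"
begin

definition lead_sub :: "'a mat \<Rightarrow> nat \<Rightarrow> 'a mat" where
  "lead_sub A k = mat k k (\<lambda>(i,j). A $$ (i,j))"

definition drop_first_col :: "'a mat \<Rightarrow> 'a mat" where
  "drop_first_col A = mat (dim_row A) (dim_col A - 1) (\<lambda>(i,j). A $$ (i, Suc j))"

definition lower_triangular :: "'a::zero mat \<Rightarrow> bool" where
  "lower_triangular A \<longleftrightarrow> (\<forall>i < dim_row A. \<forall>j < dim_col A. i < j \<longrightarrow> A $$ (i,j) = 0)"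

definition Kmat :: "nat \<Rightarrow> nat \<Rightarrow> 'a::{zero,one} mat" where
  "Kmat r c = mat r c (\<lambda>(i,j). if j = i \<or> j = Suc i then 1 else 0)"

end

theory Submission
  imports Defs
begin


lemma mult_entry:
  assumes "A \<in> carrier_mat n p" "B \<in> carrier_mat p q" "i < n" "j < q"
  shows "(A*B)$$(i,j) = (\<Sum>l<p. A$$(i,l) * B$$(l,j))"
  using assms by (simp add: scalar_prod_def lessThan_atLeast0)

definition kc :: "nat \<Rightarrow> complex mat \<Rightarrow> nat \<Rightarrow> nat \<Rightarrow> complex" where
  "kc c C l j = C$$(l,j) + (if Suc l < c then C$$(Suc l, j) else 0)"

lemma KC_entry:
  assumes C: "C \<in> carrier_mat c c" and i: "i < r" "i < c" and j: "j < c"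
  shows "(Kmat r c * C)$$(i,j) = kc c C i j"
proof -
  have "(Kmat r c * C)$$(i,j) = (\<Sum>l<c. Kmat r c $$ (i,l) * C$$(l,j))"
    by (rule mult_entry[OF _ C i(1) j], simp add: Kmat_def)
  also have "\<dots> = (\<Sum>l<c. (if l = i then C$$(l,j) else 0) + (if l = Suc i then C$$(l,j) else 0))"
    by (rule sum.cong, auto simp: Kmat_def i)
  also have "\<dots> = kc c C i j"
    by (simp add: sum.distrib kc_def i)
  finally show ?thesis .
qed

definition L0 :: "nat \<Rightarrow> complex mat" where
  "L0 r = mat r r (\<lambda>(l,p). if p = l \<or> Suc p = l then 1 else 0)"

lemma L0_mult:
  assumes Z: "Z \<in> carrier_mat r q" and l: "l < r" and j: "j < q"
  shows "(L0 r * Z)$$(l,j) = Z$$(l,j) + (if l = 0 then 0 else Z$$(l-1,j))"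
proof -
  have "(L0 r * Z)$$(l,j) = (\<Sum>p<r. L0 r $$ (l,p) * Z$$(p,j))"
    by (rule mult_entry[OF _ Z l j], simp add: L0_def)
  also have "\<dots> = (\<Sum>p<r. (if p = l then Z$$(p,j) else 0) + (if l \<noteq> 0 \<and> p = l - 1 then Z$$(p,j) else 0))"
    by (rule sum.cong, auto simp: L0_def l)
  also have "\<dots> = Z$$(l,j) + (if l = 0 then 0 else Z$$(l-1,j))"
    using l by (simp add: sum.distrib)
  finally show ?thesis .
qed

lemma L0_carrier[simp]: "L0 r \<in> carrier_mat r r" by (simp add: L0_def)

lemma det_L0: "det (L0 r) = 1"
proof -
  have "det (L0 r) = prod_list (diag_mat (L0 r))"
    by (rule det_lower_triangular[of r], auto simp: L0_def)
  also have "\<dots> = 1" by (simp add: prod_list_diag_prod L0_def)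
  finally show ?thesis .
qed

lemma inv_exists:
  assumes M: "M \<in> carrier_mat n n" and d: "det M \<noteq> (0::complex)"
  shows "\<exists>Mi. Mi \<in> carrier_mat n n \<and> M * Mi = 1\<^sub>m n \<and> Mi * M = 1\<^sub>m n"
  using det_non_zero_imp_unit[OF M d, of "()"]
  unfolding Units_def ring_mat_def by auto

lemma det_lower_nz:
  assumes B: "B \<in> carrier_mat n n" and lt: "lower_triangular B" and d: "det B \<noteq> 0" and i: "i < n"
  shows "B$$(i,i) \<noteq> (0::complex)"
proof -
  have "det B = prod_list (diag_mat B)"
    by (rule det_lower_triangular[OF _ B], insert lt B, auto simp: lower_triangular_def)
  also have "\<dots> = (\<Prod>i = 0..<n. B$$(i,i))" using B by (simp add: prod_list_diag_prod)
  finally show ?thesis using d i by auto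
qed

lemma det_lower_prod:
  assumes B: "B \<in> carrier_mat n n" and lt: "lower_triangular B" 
  shows "det B = (\<Prod>i = 0..<n. (B::complex mat)$$(i,i))"
proof -
  have "det B = prod_list (diag_mat B)"
    by (rule det_lower_triangular[OF _ B], insert lt B, auto simp: lower_triangular_def)
  also have "\<dots> = (\<Prod>i = 0..<n. B$$(i,i))" using B by (simp add: prod_list_diag_prod)
  finally show ?thesis .
qed

lemma det_upper_prod:
  assumes B: "B \<in> carrier_mat n n" and lt: "upper_triangular B" 
  shows "det B = (\<Prod>i = 0..<n. (B::complex mat)$$(i,i))"
  using det_upper_triangular[OF lt B] B by (simp add: prod_list_diag_prod)



definition sol :: "nat \<Rightarrow> nat \<Rightarrow> complex mat \<Rightarrow> complex mat \<Rightarrow> complex mat \<Rightarrow> bool" where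
  "sol r c A B C \<longleftrightarrow> B \<in> carrier_mat r r \<and> lower_triangular B
           \<and> C \<in> carrier_mat c c \<and> upper_triangular C
           \<and> C $$ (0,0) = 1 \<and> (\<forall>j\<in>{1..<c}. C $$ (0,j) = 0)
           \<and> A = B * Kmat r c * C"

definition hyp :: "nat \<Rightarrow> nat \<Rightarrow> complex mat \<Rightarrow> bool" where
  "hyp r c A \<longleftrightarrow> A \<in> carrier_mat r c
      \<and> (\<forall>k\<in>{1..r}. det (lead_sub A k) \<noteq> 0)
      \<and> (\<forall>k\<in>{1..c-1}. det (lead_sub (drop_first_col A) k) \<noteq> 0)"

definition Q :: "nat \<Rightarrow> nat \<Rightarrow> bool" where
  "Q r c \<longleftrightarrow> (\<forall>A. hyp r c A \<longrightarrow> (\<exists>!BC. case BC of (B,C) \<Rightarrow> sol r c A B C))"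

lemma sol_entry:
  assumes s: "sol r c A B C" and rc: "r \<le> c" and i: "i < r" and j: "j < c"
  shows "A$$(i,j) = (\<Sum>l<r. B$$(i,l) * kc c C l j)"
proof -
  from s have B: "B \<in> carrier_mat r r" and C: "C \<in> carrier_mat c c" and A: "A = B * Kmat r c * C"
    by (auto simp: sol_def)
  have K: "Kmat r c \<in> carrier_mat r c" by (simp add: Kmat_def)
  have "A = B * (Kmat r c * C)" using A assoc_mult_mat[OF B K C] by simp
  hence "A$$(i,j) = (\<Sum>l<r. B$$(i,l) * (Kmat r c * C)$$(l,j))"
    using mult_entry[OF B mult_carrier_mat[OF K C] i j] by simp
  also have "\<dots> = (\<Sum>l<r. B$$(i,l) * kc c C l j)"
    by (rule sum.cong, insert rc j, auto simp: KC_entry[OF C])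
  finally show ?thesis .
qed

lemma sol_carrier: "sol r c A B C \<Longrightarrow> A \<in> carrier_mat r c"
  unfolding sol_def by (auto simp: Kmat_def)

lemma sol_intro:
  assumes B: "B \<in> carrier_mat r r" "lower_triangular B"
    and C: "C \<in> carrier_mat c c" "upper_triangular C" "C $$ (0,0) = 1" "\<forall>j\<in>{1..<c}. C $$ (0,j) = 0"
    and A: "A \<in> carrier_mat r c" and rc: "r \<le> c"
    and e: "\<And>i j. i < r \<Longrightarrow> j < c \<Longrightarrow> A$$(i,j) = (\<Sum>l<r. B$$(i,l) * kc c C l j)"
  shows "sol r c A B C"
proof -
  have K: "Kmat r c \<in> carrier_mat r c" by (simp add: Kmat_def)
  have "A = B * (Kmat r c * C)"
  proof (rule eq_matI)
    fix i j assume "i < dim_row (B * (Kmat r c * C))" "j < dim_col (B * (Kmat r c * C))"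
    hence i: "i < r" and j: "j < c" using B C K by auto
    have "(B * (Kmat r c * C))$$(i,j) = (\<Sum>l<r. B$$(i,l) * (Kmat r c * C)$$(l,j))"
      using mult_entry[OF B(1) mult_carrier_mat[OF K C(1)] i j] by simp
    also have "\<dots> = (\<Sum>l<r. B$$(i,l) * kc c C l j)"
      by (rule sum.cong, insert rc j, auto simp: KC_entry[OF C(1)])
    finally show "A$$(i,j) = (B * (Kmat r c * C))$$(i,j)" using e[OF i j] by simp
  qed (insert A B C K, auto)
  hence "A = B * Kmat r c * C" using assoc_mult_mat[OF B(1) K C(1)] by simp
  thus ?thesis using B C unfolding sol_def by auto
qed

lemma diagB:
  assumes s: "sol r c A B C" and rc: "r \<le> c" and r: "1 \<le> r" and d: "det (lead_sub A r) \<noteq> 0"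
    and i: "i < r"
  shows "B$$(i,i) \<noteq> 0"
proof -
  from s have B: "B \<in> carrier_mat r r" and lt: "lower_triangular B" by (auto simp: sol_def)
  define T where "T = mat r r (\<lambda>(l,j). kc c C l j)"
  have T: "T \<in> carrier_mat r r" by (simp add: T_def)
  have "lead_sub A r = B * T"
  proof (rule eq_matI)
    fix i j assume "i < dim_row (B * T)" "j < dim_col (B * T)"
    hence i: "i < r" and j: "j < r" using B T by auto
    have "(B * T)$$(i,j) = (\<Sum>l<r. B$$(i,l) * T$$(l,j))" by (rule mult_entry[OF B T i j])
    also have "\<dots> = (\<Sum>l<r. B$$(i,l) * kc c C l j)" by (rule sum.cong, auto simp: T_def j)
    also have "\<dots> = A$$(i,j)" using sol_entry[OF s rc i] j rc by simp
    finally show "lead_sub A r $$ (i,j) = (B * T)$$(i,j)" using i j by (simp add: lead_sub_def)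
  qed (insert B T, auto simp: lead_sub_def)
  hence "det B * det T \<noteq> 0" using d det_mult[OF B T] by simp
  hence "det B \<noteq> 0" by auto
  thus ?thesis by (rule det_lower_nz[OF B lt _ i])
qed

lemma diagC:
  assumes s: "sol r (Suc r) A B C" and d: "det (lead_sub (drop_first_col A) r) \<noteq> 0"
    and p: "1 \<le> p" "p \<le> r"
  shows "C$$(p,p) \<noteq> 0"
proof -
  from s have B: "B \<in> carrier_mat r r" and C: "C \<in> carrier_mat (Suc r) (Suc r)"
    and uC: "upper_triangular C" and row0: "\<forall>j\<in>{1..<Suc r}. C $$ (0,j) = 0"
    by (auto simp: sol_def)
  have A: "A \<in> carrier_mat r (Suc r)" by (rule sol_carrier[OF s])
  define C' where "C' = mat r r (\<lambda>(p,q). C$$(Suc p, Suc q))"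
  have C': "C' \<in> carrier_mat r r" by (simp add: C'_def)
  have LC: "L0 r * C' \<in> carrier_mat r r" using mult_carrier_mat[OF L0_carrier C'] .
  have "lead_sub (drop_first_col A) r = B * (L0 r * C')"
  proof (rule eq_matI)
    fix i j assume "i < dim_row (B * (L0 r * C'))" "j < dim_col (B * (L0 r * C'))"
    hence i: "i < r" and j: "j < r" using B LC by auto
    have "(B * (L0 r * C'))$$(i,j) = (\<Sum>l<r. B$$(i,l) * (L0 r * C')$$(l,j))" by (rule mult_entry[OF B LC i j])
    also have "\<dots> = (\<Sum>l<r. B$$(i,l) * kc (Suc r) C l (Suc j))"
    proof (rule sum.cong)
      fix l assume "l \<in> {..<r}"
      hence l: "l < r" by simp
      have "(L0 r * C')$$(l,j) = C'$$(l,j) + (if l = 0 then 0 else C'$$(l-1,j))"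
        by (rule L0_mult[OF C' l j])
      also have "\<dots> = kc (Suc r) C l (Suc j)"
        using l j row0 by (cases l, auto simp: C'_def kc_def)
      finally show "B$$(i,l) * (L0 r * C')$$(l,j) = B$$(i,l) * kc (Suc r) C l (Suc j)" by simp
    qed simp
    also have "\<dots> = A$$(i,Suc j)" using sol_entry[OF s _ i, of "Suc j"] j by simp
    finally show "lead_sub (drop_first_col A) r $$ (i,j) = (B * (L0 r * C'))$$(i,j)"
      using i j A by (simp add: lead_sub_def drop_first_col_def)
  qed (insert B LC, auto simp: lead_sub_def)
  hence "det B * (det (L0 r) * det C') \<noteq> 0" using d det_mult[OF B LC] det_mult[OF L0_carrier C'] by simp
  hence "det C' \<noteq> 0" by auto
  moreover have "upper_triangular C'"
    by (rule upper_triangularI, insert uC C, auto simp: C'_def intro!: upper_triangularD[OF uC])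
  ultimately have "(\<Prod>i = 0..<r. C'$$(i,i)) \<noteq> 0" using det_upper_prod[OF C'] by simp
  hence "C'$$(p-1,p-1) \<noteq> 0" using p by auto
  thus ?thesis using p by (simp add: C'_def)
qed



lemma ex1_pair:
  assumes "P B0 C0" and "\<And>B C B' C'. P B C \<Longrightarrow> P B' C' \<Longrightarrow> B = B' \<and> C = C'"
  shows "\<exists>!BC. case BC of (B,C) \<Rightarrow> P B C"
  by (rule ex1I[of _ "(B0,C0)"], insert assms, auto)

lemma Q_uniq:
  assumes "Q r c" "hyp r c A" "sol r c A B C" "sol r c A B' C'"
  shows "B = B' \<and> C = C'"
proof -
  from assms(1,2) have "\<exists>!BC. case BC of (B,C) \<Rightarrow> sol r c A B C" by (auto simp: Q_def)
  then have "(B,C) = (B',C')" using assms(3,4) by (metis (mono_tags, lifting) case_prod_conv)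
  thus ?thesis by simp
qed

lemma Q_ex:
  assumes "Q r c" "hyp r c A"
  obtains B C where "sol r c A B C"
proof -
  from assms have "\<exists>!BC. case BC of (B,C) \<Rightarrow> sol r c A B C" by (auto simp: Q_def)
  then obtain BC where "case BC of (B,C) \<Rightarrow> sol r c A B C" by auto
  thus ?thesis using that by (cases BC, auto)
qed

lemma Q_base: "Q 0 1"
  unfolding Q_def
proof (intro allI impI)
  fix A assume h: "hyp 0 1 A"
  hence A: "A \<in> carrier_mat 0 1" by (simp add: hyp_def)
  show "\<exists>!BC. case BC of (B,C) \<Rightarrow> sol 0 1 A B C"
  proof (rule ex1_pair[of _ "1\<^sub>m 0" "1\<^sub>m 1"])
    show "sol 0 1 A (1\<^sub>m 0) (1\<^sub>m 1)"
      by (rule sol_intro, insert A, auto simp: lower_triangular_def)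
  next
    fix B C B' C' assume s: "sol 0 1 A B C" "sol 0 1 A B' C'"
    show "B = B' \<and> C = C'"
    proof
      show "B = B'" using s by (intro eq_matI, auto simp: sol_def)
      show "C = C'" using s by (intro eq_matI, auto simp: sol_def)
    qed
  qed
qed



lemma sum_lessThan_Suc_last: "(\<Sum>l<Suc r. f l) = (\<Sum>l<r. f l) + (f r :: complex)"
  by simp

lemma row_step:
  assumes IH: "Q r (Suc r)"
  shows "Q (Suc r) (Suc r)"
  unfolding Q_def
proof (intro allI impI)
  fix A assume h: "hyp (Suc r) (Suc r) A"
  hence A: "A \<in> carrier_mat (Suc r) (Suc r)" by (simp add: hyp_def)
  define At where "At = mat r (Suc r) (\<lambda>(i,j). A$$(i,j))"
  have At: "At \<in> carrier_mat r (Suc r)" by (simp add: At_def)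
  have hAt: "hyp r (Suc r) At"
    unfolding hyp_def
  proof (intro conjI ballI)
    show "At \<in> carrier_mat r (Suc r)" by (rule At)
  next
    fix k assume k: "k \<in> {1..r}"
    have "lead_sub At k = lead_sub A k"
      using k by (intro eq_matI, auto simp: lead_sub_def At_def)
    thus "det (lead_sub At k) \<noteq> 0" using h k by (auto simp: hyp_def)
  next
    fix k assume k: "k \<in> {1..Suc r - 1}"
    have "lead_sub (drop_first_col At) k = lead_sub (drop_first_col A) k"
      using k A by (intro eq_matI, auto simp: lead_sub_def At_def drop_first_col_def)
    thus "det (lead_sub (drop_first_col At) k) \<noteq> 0" using h k by (auto simp: hyp_def)
  qed
  have K: "Kmat (Suc r) (Suc r) \<in> carrier_mat (Suc r) (Suc r)" by (simp add: Kmat_def)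
  have Tent: "(Kmat (Suc r) (Suc r) * C)$$(l,j) = kc (Suc r) C l j"
    if "C \<in> carrier_mat (Suc r) (Suc r)" "l < Suc r" "j < Suc r" for C l j
    by (rule KC_entry, insert that, auto)
  have Tdet: "det (Kmat (Suc r) (Suc r) * C) \<noteq> 0" if s: "sol r (Suc r) At B0 C" for B0 C
  proof -
    from s have C: "C \<in> carrier_mat (Suc r) (Suc r)" and uC: "upper_triangular C"
      and C00: "C$$(0,0) = 1" by (auto simp: sol_def)
    have T: "Kmat (Suc r) (Suc r) * C \<in> carrier_mat (Suc r) (Suc r)" using mult_carrier_mat[OF K C] .
    have uT: "upper_triangular (Kmat (Suc r) (Suc r) * C)"
    proof (rule upper_triangularI)
      fix i j assume ji: "j < i" and "i < dim_row (Kmat (Suc r) (Suc r) * C)"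
      hence i: "i < Suc r" by (simp add: Kmat_def)
      have "C$$(i,j) = 0" using uC ji i C by auto
      moreover have "i < r \<Longrightarrow> C$$(Suc i,j) = 0" using uC ji i C by auto
      ultimately show "(Kmat (Suc r) (Suc r) * C)$$(i,j) = 0"
        using Tent[OF C i] ji i by (auto simp: kc_def)
    qed
    have "det (Kmat (Suc r) (Suc r) * C) = (\<Prod>l = 0..<Suc r. (Kmat (Suc r) (Suc r) * C)$$(l,l))"
      by (rule det_upper_prod[OF T uT])
    also have "\<dots> = (\<Prod>l = 0..<Suc r. C$$(l,l))"
      by (rule prod.cong, insert C uC, auto simp: Tent[OF C] kc_def intro!: upper_triangularD[OF uC])
    also have "\<dots> \<noteq> 0"
    proof -
      have "C$$(p,p) \<noteq> 0" if p: "p < Suc r" for p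
      proof (cases "p = 0")
        case True thus ?thesis using C00 by simp
      next
        case False
        have "det (lead_sub (drop_first_col At) r) \<noteq> 0" using hAt False p by (auto simp: hyp_def)
        thus ?thesis by (rule diagC[OF s], insert False p, auto)
      qed
      thus ?thesis by auto
    qed
    finally show ?thesis .
  qed
  show "\<exists>!BC. case BC of (B,C) \<Rightarrow> sol (Suc r) (Suc r) A B C"
  proof -
    obtain B0 C where s0: "sol r (Suc r) At B0 C" using Q_ex[OF IH hAt] by blast
    from s0 have B0: "B0 \<in> carrier_mat r r" and lB0: "lower_triangular B0"
      and C: "C \<in> carrier_mat (Suc r) (Suc r)" by (auto simp: sol_def)
    define T where "T = Kmat (Suc r) (Suc r) * C"
    have T: "T \<in> carrier_mat (Suc r) (Suc r)" unfolding T_def using mult_carrier_mat[OF K C] .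
    obtain Ti where Ti: "Ti \<in> carrier_mat (Suc r) (Suc r)" "T * Ti = 1\<^sub>m (Suc r)" "Ti * T = 1\<^sub>m (Suc r)"
      using inv_exists[OF T Tdet[OF s0, folded T_def]] by blast
    define R where "R = mat 1 (Suc r) (\<lambda>(_,j). A$$(r,j))"
    have R: "R \<in> carrier_mat 1 (Suc r)" by (simp add: R_def)
    define X where "X = R * Ti"
    have X: "X \<in> carrier_mat 1 (Suc r)" unfolding X_def using mult_carrier_mat[OF R Ti(1)] .
    have XT: "X * T = R" unfolding X_def using assoc_mult_mat[OF R Ti(1) T] Ti(3) R by simp
    define B where "B = mat (Suc r) (Suc r) (\<lambda>(i,j). if i < r then (if j < r then B0$$(i,j) else 0) else X$$(0,j))"
    have exs: "sol (Suc r) (Suc r) A B C"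
    proof (rule sol_intro)
      show "B \<in> carrier_mat (Suc r) (Suc r)" by (simp add: B_def)
      show "lower_triangular B" unfolding lower_triangular_def
        using lB0 B0 by (auto simp: B_def lower_triangular_def)
    next
      fix i j assume i: "i < Suc r" and j: "j < Suc r"
      show "A$$(i,j) = (\<Sum>l<Suc r. B$$(i,l) * kc (Suc r) C l j)"
      proof (cases "i < r")
        case True
        have "(\<Sum>l<Suc r. B$$(i,l) * kc (Suc r) C l j) = (\<Sum>l<r. B0$$(i,l) * kc (Suc r) C l j)"
        proof -
          have "(\<Sum>l<Suc r. B$$(i,l) * kc (Suc r) C l j) = (\<Sum>l<r. B$$(i,l) * kc (Suc r) C l j) + B$$(i,r) * kc (Suc r) C r j"
            by (rule sum_lessThan_Suc_last)
          also have "B$$(i,r) = 0" using True by (simp add: B_def)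
          also have "(\<Sum>l<r. B$$(i,l) * kc (Suc r) C l j) = (\<Sum>l<r. B0$$(i,l) * kc (Suc r) C l j)"
            by (rule sum.cong, insert i True, auto simp: B_def)
          finally show ?thesis by simp
        qed
        also have "\<dots> = At$$(i,j)" using sol_entry[OF s0 _ True j] by simp
        finally show ?thesis using True j by (simp add: At_def)
      next
        case False
        hence ir: "i = r" using i by simp
        have "(\<Sum>l<Suc r. B$$(i,l) * kc (Suc r) C l j) = (\<Sum>l<Suc r. X$$(0,l) * T$$(l,j))"
          by (rule sum.cong, auto simp: B_def ir T_def Tent[OF C] j)
        also have "\<dots> = (X * T)$$(0,j)" by (rule mult_entry[OF X T _ j, symmetric], simp)
        also have "\<dots> = A$$(i,j)" using XT j ir by (simp add: R_def)
        finally show ?thesis by simp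
      qed
    qed (insert s0 A, auto simp: sol_def)
    show ?thesis
    proof (rule ex1_pair[of "sol (Suc r) (Suc r) A" B C, OF exs])
      fix B1 C1 B2 C2 assume s1: "sol (Suc r) (Suc r) A B1 C1" and s2: "sol (Suc r) (Suc r) A B2 C2"
      have restr: "sol r (Suc r) At (lead_sub Bx r) Cx" if sx: "sol (Suc r) (Suc r) A Bx Cx" for Bx Cx
      proof -
        from sx have Bx: "Bx \<in> carrier_mat (Suc r) (Suc r)" and lBx: "lower_triangular Bx" by (auto simp: sol_def)
        show ?thesis
        proof (rule sol_intro)
          show "lead_sub Bx r \<in> carrier_mat r r" by (simp add: lead_sub_def)
          show "lower_triangular (lead_sub Bx r)" using lBx Bx by (auto simp: lead_sub_def lower_triangular_def)
        next
          fix i j assume i: "i < r" and j: "j < Suc r"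
          have "At$$(i,j) = A$$(i,j)" using i j by (simp add: At_def)
          also have "\<dots> = (\<Sum>l<Suc r. Bx$$(i,l) * kc (Suc r) Cx l j)" using sol_entry[OF sx _ _ j] i by simp
          also have "\<dots> = (\<Sum>l<r. lead_sub Bx r$$(i,l) * kc (Suc r) Cx l j)"
            using lBx Bx i by (subst sum_lessThan_Suc_last, auto simp: lower_triangular_def lead_sub_def intro!: sum.cong)
          finally show "At$$(i,j) = (\<Sum>l<r. lead_sub Bx r$$(i,l) * kc (Suc r) Cx l j)" .
        qed (insert sx At, auto simp: sol_def)
      qed
      from Q_uniq[OF IH hAt restr[OF s1] restr[OF s2]]
      have eqB: "lead_sub B1 r = lead_sub B2 r" and eqC: "C1 = C2" by auto
      from s1 have B1: "B1 \<in> carrier_mat (Suc r) (Suc r)" and lB1: "lower_triangular B1"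
        and C1: "C1 \<in> carrier_mat (Suc r) (Suc r)" by (auto simp: sol_def)
      from s2 have B2: "B2 \<in> carrier_mat (Suc r) (Suc r)" and lB2: "lower_triangular B2" by (auto simp: sol_def)
      define T1 where "T1 = Kmat (Suc r) (Suc r) * C1"
      have T1: "T1 \<in> carrier_mat (Suc r) (Suc r)" unfolding T1_def using mult_carrier_mat[OF K C1] .
      obtain T1i where T1i: "T1i \<in> carrier_mat (Suc r) (Suc r)" "T1 * T1i = 1\<^sub>m (Suc r)"
        using inv_exists[OF T1 Tdet[OF restr[OF s1], folded T1_def]] by blast
      define X1 where "X1 = mat 1 (Suc r) (\<lambda>(_,l). B1$$(r,l))"
      define X2 where "X2 = mat 1 (Suc r) (\<lambda>(_,l). B2$$(r,l))"
      have X1: "X1 \<in> carrier_mat 1 (Suc r)" and X2: "X2 \<in> carrier_mat 1 (Suc r)" by (auto simp: X1_def X2_def)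
      have XTe: "(Y * T1)$$(0,j) = A$$(r,j)"
        if Y: "Y = mat 1 (Suc r) (\<lambda>(_,l). By$$(r,l))" and sy: "sol (Suc r) (Suc r) A By C1" and j: "j < Suc r" for Y By j
      proof -
        have Yc: "Y \<in> carrier_mat 1 (Suc r)" using Y by simp
        have "(Y * T1)$$(0,j) = (\<Sum>l<Suc r. Y$$(0,l) * T1$$(l,j))" by (rule mult_entry[OF Yc T1 _ j], simp)
        also have "\<dots> = (\<Sum>l<Suc r. By$$(r,l) * kc (Suc r) C1 l j)"
          by (rule sum.cong, auto simp: Y T1_def Tent[OF C1] j)
        also have "\<dots> = A$$(r,j)" using sol_entry[OF sy _ _ j] by simp
        finally show ?thesis .
      qed
      have "X1 * T1 = X2 * T1"
        using X1 X2 T1 XTe[OF X1_def s1] XTe[OF X2_def s2[folded eqC]] by (intro eq_matI, auto)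
      hence "X1 * T1 * T1i = X2 * T1 * T1i" by simp
      hence X12: "X1 = X2" using assoc_mult_mat[OF X1 T1 T1i(1)] assoc_mult_mat[OF X2 T1 T1i(1)] T1i(2) X1 X2
        by simp
      have "B1 = B2"
      proof (rule eq_matI)
        fix i j assume "i < dim_row B2" "j < dim_col B2"
        hence i: "i < Suc r" and j: "j < Suc r" using B2 by auto
        show "B1$$(i,j) = B2$$(i,j)"
        proof (cases "i < r")
          case True
          show ?thesis
          proof (cases "j < r")
            case True
            have "lead_sub B1 r $$ (i,j) = lead_sub B2 r $$ (i,j)" using eqB by simp
            thus ?thesis using True \<open>i < r\<close> by (simp add: lead_sub_def)
          next
            case False
            hence "i < j" using \<open>i<r\<close> by simp
            thus ?thesis using lB1 lB2 B1 B2 j by (auto simp: lower_triangular_def)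
          qed
        next
          case False
          hence "i = r" using i by simp
          have "X1$$(0,j) = X2$$(0,j)" using X12 by simp
          thus ?thesis using \<open>i = r\<close> j by (simp add: X1_def X2_def)
        qed
      qed (insert B1 B2, auto)
      thus "B1 = B2 \<and> C1 = C2" using eqC by simp
    qed
  qed
qed



lemma col_kc:
  assumes C: "C \<in> carrier_mat (Suc r) (Suc r)" and C0: "C$$(0,r) = 0" and l: "l < r"
  shows "kc (Suc r) C l r = (L0 r * mat r 1 (\<lambda>(p,_). C$$(Suc p, r)))$$(l,0)"
proof -
  have "(L0 r * mat r 1 (\<lambda>(p,_). C$$(Suc p, r)))$$(l,0)
     = mat r 1 (\<lambda>(p,_). C$$(Suc p, r)) $$(l,0) + (if l = 0 then 0 else mat r 1 (\<lambda>(p,_). C$$(Suc p, r))$$(l-1,0))"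
    by (rule L0_mult, insert l, auto)
  also have "\<dots> = kc (Suc r) C l r" using l C0 by (cases l, auto simp: kc_def)
  finally show ?thesis by simp
qed

lemma col_step:
  assumes IH: "Q r r" and r1: "1 \<le> r"
  shows "Q r (Suc r)"
  unfolding Q_def
proof (intro allI impI)
  fix A assume h: "hyp r (Suc r) A"
  hence A: "A \<in> carrier_mat r (Suc r)" by (simp add: hyp_def)
  define Al where "Al = lead_sub A r"
  have Al: "Al \<in> carrier_mat r r" by (simp add: Al_def lead_sub_def)
  have hAl: "hyp r r Al"
    unfolding hyp_def
  proof (intro conjI ballI)
    show "Al \<in> carrier_mat r r" by (rule Al)
  next
    fix k assume k: "k \<in> {1..r}"
    have "lead_sub Al k = lead_sub A k"
      using k by (intro eq_matI, auto simp: lead_sub_def Al_def)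
    thus "det (lead_sub Al k) \<noteq> 0" using h k by (auto simp: hyp_def)
  next
    fix k assume k: "k \<in> {1..r - 1}"
    have "lead_sub (drop_first_col Al) k = lead_sub (drop_first_col A) k"
      using k A by (intro eq_matI, auto simp: lead_sub_def Al_def drop_first_col_def)
    thus "det (lead_sub (drop_first_col Al) k) \<noteq> 0" using h k by (auto simp: hyp_def)
  qed
  have Mdet: "det (B * L0 r) \<noteq> 0" if s: "sol r r Al B C0" for B C0
  proof -
    from s have B: "B \<in> carrier_mat r r" and lB: "lower_triangular B" by (auto simp: sol_def)
    have d: "det (lead_sub Al r) \<noteq> 0" using hAl r1 by (auto simp: hyp_def)
    have "det B = (\<Prod>i = 0..<r. B$$(i,i))" by (rule det_lower_prod[OF B lB])
    also have "\<dots> \<noteq> 0" using diagB[OF s _ r1 d] by auto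
    finally show ?thesis using det_mult[OF B L0_carrier] det_L0 by simp
  qed
  define Acol where "Acol = mat r 1 (\<lambda>(i,_). A$$(i,r))"
  have Acol: "Acol \<in> carrier_mat r 1" by (simp add: Acol_def)
  show "\<exists>!BC. case BC of (B,C) \<Rightarrow> sol r (Suc r) A B C"
  proof -
    obtain B C0 where s0: "sol r r Al B C0" using Q_ex[OF IH hAl] by blast
    from s0 have B: "B \<in> carrier_mat r r" and lB: "lower_triangular B"
      and C0: "C0 \<in> carrier_mat r r" and uC0: "upper_triangular C0" and C000: "C0$$(0,0) = 1"
      and row0: "\<forall>j\<in>{1..<r}. C0 $$ (0,j) = 0" by (auto simp: sol_def)
    define M where "M = B * L0 r"
    have M: "M \<in> carrier_mat r r" unfolding M_def using mult_carrier_mat[OF B L0_carrier] .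
    obtain Mi where Mi: "Mi \<in> carrier_mat r r" "M * Mi = 1\<^sub>m r" "Mi * M = 1\<^sub>m r"
      using inv_exists[OF M Mdet[OF s0, folded M_def]] by blast
    define Y where "Y = Mi * Acol"
    have Y: "Y \<in> carrier_mat r 1" unfolding Y_def using mult_carrier_mat[OF Mi(1) Acol] .
    have MY: "M * Y = Acol" unfolding Y_def using assoc_mult_mat[OF M Mi(1) Acol, symmetric] Mi(2) Acol by simp
    define C where "C = mat (Suc r) (Suc r) (\<lambda>(i,j). if j < r then (if i < r then C0$$(i,j) else 0) else (if i = 0 then 0 else Y$$(i-1,0)))"
    have Cc: "C \<in> carrier_mat (Suc r) (Suc r)" by (simp add: C_def)
    have CY: "mat r 1 (\<lambda>(p,_). C$$(Suc p, r)) = Y"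
      using Y by (intro eq_matI, auto simp: C_def)
    have C0r: "C$$(0,r) = 0" by (simp add: C_def)
    have exs: "sol r (Suc r) A B C"
    proof (rule sol_intro)
      show "C \<in> carrier_mat (Suc r) (Suc r)" by (rule Cc)
      show "upper_triangular C"
        by (rule upper_triangularI, insert uC0 C0, auto simp: C_def)
      show "C$$(0,0) = 1" using r1 C000 by (simp add: C_def)
      show "\<forall>j\<in>{1..<Suc r}. C $$ (0,j) = 0" using row0 by (auto simp: C_def)
    next
      fix i j assume i: "i < r" and j: "j < Suc r"
      show "A$$(i,j) = (\<Sum>l<r. B$$(i,l) * kc (Suc r) C l j)"
      proof (cases "j < r")
        case True
        have "(\<Sum>l<r. B$$(i,l) * kc (Suc r) C l j) = (\<Sum>l<r. B$$(i,l) * kc r C0 l j)"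
          by (rule sum.cong, insert True uC0 C0, auto simp: kc_def C_def)
        also have "\<dots> = Al$$(i,j)" using sol_entry[OF s0 _ i True] by simp
        finally show ?thesis using i True by (simp add: Al_def lead_sub_def)
      next
        case False
        hence jr: "j = r" using j by simp
        have LY: "L0 r * Y \<in> carrier_mat r 1" using mult_carrier_mat[OF L0_carrier Y] .
        have "(\<Sum>l<r. B$$(i,l) * kc (Suc r) C l j) = (\<Sum>l<r. B$$(i,l) * (L0 r * Y)$$(l,0))"
          by (rule sum.cong, insert jr, auto simp: col_kc[OF Cc C0r, unfolded CY])
        also have "\<dots> = (B * (L0 r * Y))$$(i,0)" by (rule mult_entry[OF B LY i, symmetric], simp)
        also have "B * (L0 r * Y) = M * Y" unfolding M_def using assoc_mult_mat[OF B L0_carrier Y] by simp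
        also have "(M * Y)$$(i,0) = A$$(i,j)" using MY i jr by (simp add: Acol_def)
        finally show ?thesis by simp
      qed
    qed (insert B lB A, auto)
    show ?thesis
    proof (rule ex1_pair[of "sol r (Suc r) A" B C, OF exs])
      fix B1 C1 B2 C2 assume s1: "sol r (Suc r) A B1 C1" and s2: "sol r (Suc r) A B2 C2"
      have restr: "sol r r Al Bx (lead_sub Cx r)" if sx: "sol r (Suc r) A Bx Cx" for Bx Cx
      proof -
        from sx have Cx: "Cx \<in> carrier_mat (Suc r) (Suc r)" and uCx: "upper_triangular Cx"
          and Cx00: "Cx$$(0,0) = 1" and row0x: "\<forall>j\<in>{1..<Suc r}. Cx $$ (0,j) = 0" by (auto simp: sol_def)
        show ?thesis
        proof (rule sol_intro)
          show "lead_sub Cx r \<in> carrier_mat r r" by (simp add: lead_sub_def)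
          show "upper_triangular (lead_sub Cx r)"
            by (rule upper_triangularI, insert uCx Cx, auto simp: lead_sub_def)
          show "lead_sub Cx r $$ (0,0) = 1" using r1 Cx00 by (simp add: lead_sub_def)
          show "\<forall>j\<in>{1..<r}. lead_sub Cx r $$ (0,j) = 0" using row0x by (auto simp: lead_sub_def)
        next
          fix i j assume i: "i < r" and j: "j < r"
          have "Al$$(i,j) = A$$(i,j)" using i j by (simp add: Al_def lead_sub_def)
          also have "\<dots> = (\<Sum>l<r. Bx$$(i,l) * kc (Suc r) Cx l j)" using sol_entry[OF sx _ i, of j] j by simp
          also have "\<dots> = (\<Sum>l<r. Bx$$(i,l) * kc r (lead_sub Cx r) l j)"
          proof (rule sum.cong)
            fix l assume "l \<in> {..<r}"
            hence l: "l < r" by simp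
            have "\<not> Suc l < r \<Longrightarrow> Cx$$(Suc l, j) = 0"
              using upper_triangularD[OF uCx, of j "Suc l"] l j Cx by auto
            thus "Bx$$(i,l) * kc (Suc r) Cx l j = Bx$$(i,l) * kc r (lead_sub Cx r) l j"
              using l j by (auto simp: kc_def lead_sub_def)
          qed simp
          finally show "Al$$(i,j) = (\<Sum>l<r. Bx$$(i,l) * kc r (lead_sub Cx r) l j)" .
        qed (insert sx Al, auto simp: sol_def)
      qed
      from Q_uniq[OF IH hAl restr[OF s1] restr[OF s2]]
      have eqB: "B1 = B2" and eqC: "lead_sub C1 r = lead_sub C2 r" by auto
      from s1 have B1: "B1 \<in> carrier_mat r r" by (auto simp: sol_def)
      define M1 where "M1 = B1 * L0 r"
      have M1: "M1 \<in> carrier_mat r r" unfolding M1_def using mult_carrier_mat[OF B1 L0_carrier] .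
      obtain M1i where M1i: "M1i \<in> carrier_mat r r" "M1i * M1 = 1\<^sub>m r"
        using inv_exists[OF M1 Mdet[OF restr[OF s1], folded M1_def]] by blast
      have MYx: "M1 * mat r 1 (\<lambda>(p,_). Cx$$(Suc p, r)) = Acol" if sx: "sol r (Suc r) A B1 Cx" for Cx
      proof -
        from sx have Cx: "Cx \<in> carrier_mat (Suc r) (Suc r)" 
          and row0x: "\<forall>j\<in>{1..<Suc r}. Cx $$ (0,j) = 0" by (auto simp: sol_def)
        have C0x: "Cx$$(0,r) = 0" using row0x r1 by auto
        define Yx where "Yx = mat r 1 (\<lambda>(p,_). Cx$$(Suc p, r))"
        have Yx: "Yx \<in> carrier_mat r 1" by (simp add: Yx_def)
        have LY: "L0 r * Yx \<in> carrier_mat r 1" using mult_carrier_mat[OF L0_carrier Yx] .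
        have "M1 * Yx = B1 * (L0 r * Yx)" unfolding M1_def using assoc_mult_mat[OF B1 L0_carrier Yx] by simp
        also have "\<dots> = Acol"
        proof (rule eq_matI)
          fix i j assume "i < dim_row Acol" "j < dim_col Acol"
          hence i: "i < r" and j0: "j = 0" using Acol by auto
          have "(B1 * (L0 r * Yx))$$(i,0) = (\<Sum>l<r. B1$$(i,l) * (L0 r * Yx)$$(l,0))"
            by (rule mult_entry[OF B1 LY i], simp)
          also have "\<dots> = (\<Sum>l<r. B1$$(i,l) * kc (Suc r) Cx l r)"
            by (rule sum.cong, auto simp: col_kc[OF Cx C0x] Yx_def)
          also have "\<dots> = A$$(i,r)" using sol_entry[OF sx _ i, of r] by simp
          finally show "(B1 * (L0 r * Yx))$$(i,j) = Acol$$(i,j)" using i j0 by (simp add: Acol_def)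
        qed (insert B1 LY Acol, auto)
        finally show ?thesis unfolding Yx_def .
      qed
      define Y1 where "Y1 = mat r 1 (\<lambda>(p,_). C1$$(Suc p, r))"
      define Y2 where "Y2 = mat r 1 (\<lambda>(p,_). C2$$(Suc p, r))"
      have Y1: "Y1 \<in> carrier_mat r 1" and Y2: "Y2 \<in> carrier_mat r 1" by (auto simp: Y1_def Y2_def)
      have "M1 * Y1 = M1 * Y2" using MYx[OF s1] MYx[OF s2[folded eqB]] unfolding Y1_def Y2_def by simp
      hence "M1i * (M1 * Y1) = M1i * (M1 * Y2)" by simp
      hence Y12: "Y1 = Y2" using assoc_mult_mat[OF M1i(1) M1 Y1] assoc_mult_mat[OF M1i(1) M1 Y2] M1i(2) Y1 Y2
        by simp
      from s1 have C1: "C1 \<in> carrier_mat (Suc r) (Suc r)" and uC1: "upper_triangular C1"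
        and r01: "\<forall>j\<in>{1..<Suc r}. C1 $$ (0,j) = 0" by (auto simp: sol_def)
      from s2 have C2: "C2 \<in> carrier_mat (Suc r) (Suc r)" and uC2: "upper_triangular C2"
        and r02: "\<forall>j\<in>{1..<Suc r}. C2 $$ (0,j) = 0" by (auto simp: sol_def)
      have "C1 = C2"
      proof (rule eq_matI)
        fix i j assume "i < dim_row C2" "j < dim_col C2"
        hence i: "i < Suc r" and j: "j < Suc r" using C2 by auto
        show "C1$$(i,j) = C2$$(i,j)"
        proof (cases "j < r")
          case True
          show ?thesis
          proof (cases "i < r")
            case True
            have "lead_sub C1 r $$ (i,j) = lead_sub C2 r $$ (i,j)" using eqC by simp
            thus ?thesis using True \<open>j < r\<close> by (simp add: lead_sub_def)
          next
            case False
            hence "j < i" using \<open>j<r\<close> by simp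
            thus ?thesis using upper_triangularD[OF uC1, of j i] upper_triangularD[OF uC2, of j i] C1 C2 i by auto
          qed
        next
          case False
          hence jr: "j = r" using j by simp
          show ?thesis
          proof (cases i)
            case 0 thus ?thesis using r01 r02 jr r1 by auto
          next
            case (Suc p)
            have "Y1$$(p,0) = Y2$$(p,0)" using Y12 by simp
            thus ?thesis using Suc i jr by (simp add: Y1_def Y2_def)
          qed
        qed
      qed (insert C1 C2, auto)
      thus "B1 = B2 \<and> C1 = C2" using eqB by simp
    qed
  qed
qed

lemma Q_main: "Q r (Suc r)"
proof (induction r)
  case 0 show ?case using Q_base by simp
next
  case (Suc r)
  show ?case by (rule col_step[OF row_step[OF Suc]], simp)
qed


theorem theorem7p2:
  shows
  "(\<forall>(m::nat) (A::complex mat).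
      1 \<le> m \<and> A \<in> carrier_mat m m
      \<and> (\<forall>k\<in>{1..m}. det (lead_sub A k) \<noteq> 0)
      \<and> (\<forall>k\<in>{1..m-1}. det (lead_sub (drop_first_col A) k) \<noteq> 0)
      \<longrightarrow> (\<exists>!BC. case BC of (B, C) \<Rightarrow>
             B \<in> carrier_mat m m \<and> lower_triangular B
           \<and> C \<in> carrier_mat m m \<and> upper_triangular C
           \<and> C $$ (0,0) = 1 \<and> (\<forall>j\<in>{1..<m}. C $$ (0,j) = 0)
           \<and> A = B * Kmat m m * C))
   \<and>
   (\<forall>(m::nat) (A::complex mat).
      1 \<le> m \<and> A \<in> carrier_mat (m-1) m
      \<and> (\<forall>k\<in>{1..m-1}. det (lead_sub A k) \<noteq> 0)
      \<and> (\<forall>k\<in>{1..m-1}. det (lead_sub (drop_first_col A) k) \<noteq> 0)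
      \<longrightarrow> (\<exists>!BC. case BC of (B, C) \<Rightarrow>
             B \<in> carrier_mat (m-1) (m-1) \<and> lower_triangular B
           \<and> C \<in> carrier_mat m m \<and> upper_triangular C
           \<and> C $$ (0,0) = 1 \<and> (\<forall>j\<in>{1..<m}. C $$ (0,j) = 0)
           \<and> A = B * Kmat (m-1) m * C))"
  proof (intro conjI allI impI)
  fix m :: nat and A :: "complex mat"
  assume H: "1 \<le> m \<and> A \<in> carrier_mat m m
      \<and> (\<forall>k\<in>{1..m}. det (lead_sub A k) \<noteq> 0)
      \<and> (\<forall>k\<in>{1..m-1}. det (lead_sub (drop_first_col A) k) \<noteq> 0)"
  then obtain m' where m: "m = Suc m'" by (cases m, auto)
  have "Q m m" unfolding m by (rule row_step[OF Q_main])
  moreover have "hyp m m A" using H by (simp add: hyp_def)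
  ultimately show "\<exists>!BC. case BC of (B, C) \<Rightarrow>
             B \<in> carrier_mat m m \<and> lower_triangular B
           \<and> C \<in> carrier_mat m m \<and> upper_triangular C
           \<and> C $$ (0,0) = 1 \<and> (\<forall>j\<in>{1..<m}. C $$ (0,j) = 0)
           \<and> A = B * Kmat m m * C"
    unfolding Q_def sol_def by blast
next
  fix m :: nat and A :: "complex mat"
  assume H: "1 \<le> m \<and> A \<in> carrier_mat (m-1) m
      \<and> (\<forall>k\<in>{1..m-1}. det (lead_sub A k) \<noteq> 0)
      \<and> (\<forall>k\<in>{1..m-1}. det (lead_sub (drop_first_col A) k) \<noteq> 0)"
  then obtain m' where m: "m = Suc m'" by (cases m, auto)
  have "Q (m-1) m" unfolding m using Q_main by simp
  moreover have "hyp (m-1) m A" using H by (simp add: hyp_def)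
  ultimately show "\<exists>!BC. case BC of (B, C) \<Rightarrow>
             B \<in> carrier_mat (m-1) (m-1) \<and> lower_triangular B
           \<and> C \<in> carrier_mat m m \<and> upper_triangular C
           \<and> C $$ (0,0) = 1 \<and> (\<forall>j\<in>{1..<m}. C $$ (0,j) = 0)
           \<and> A = B * Kmat (m-1) m * C"
    unfolding Q_def sol_def by blast
qed

end
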